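(* Let $k>0$. If a deterministic KAT automaton $A$ is obtained through (repeated) composition from deterministic KAT automata each having strictly fewer than $k$ states, then $L(A)\ne L_k$. Precisely: let $\mathcal{C}_k$ be the smallest class of deterministic KAT automata (over arbitrary finite alphabets) that contains every deterministic KAT automaton with fewer than $k$ states and is closed under the following: whenever $A\in\mathcal{C}_k$ is over $(\Sigma_0,T_0)$, $\mathfrak{t}:T_0\to\mathsf{BA}(T_1)$, and $\mathfrak{s}$ assigns to each $p\in\Sigma_0$ an automaton $\mathfrak{s}(p)\in\mathcal{C}_k$ over $(\Sigma_1,T_1)$, then $\mathsf{compose}^{\mathfrak{s}}_{\mathfrak{t}}(A)\in\mathcal{C}_k$. Then no automaton in $\mathcal{C}_k$ recognizes $L_k$.
   Context: Atoms $\mathsf{At}_T=2^T$ for finite test set $T$; $\mathsf{BA}(T)$: Boolean expressions over $T$; $\alpha\le b$ means $b$ holds under the assignment making exactly the tests in $\alpha$ true. Guarded strings: words in $\mathsf{At}_T(\Sigma\mathsf{At}_T)^*$. A deterministic KAT automaton over $(\Sigma,T)$ is $A=(Q,\delta,\iota)$, $Q$ finite, $\delta:Q\times\mathsf{At}_T\to\{\mathsf{accept},\mathsf{reject}\}+\Sigma\times Q$, $\iota:\mathsf{At}_T\to\{\mathsf{accept},\mathsf{reject}\}+\Sigma\times Q$. For $\gamma$ of the type of $\iota$, $L_A(\gamma)$ is the smallest set with: $\gamma(\alpha)=\mathsf{accept}\Rightarrow\alpha\in L_A(\gamma)$; $\gamma(\alpha)=(p,q)$ and $w\in L_A(\delta(q,-))\Rightarrow\alpha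 pw\in L_A(\gamma)$. $L(A)=L_A(\iota)$; $A$ recognizes $L(A)$. Composition. (1) For $\mathfrak{t}:T_0\to\mathsf{BA}(T_1)$, $A=(Q,\delta,\iota)$ over $(\Sigma,T_0)$: $\mathfrak{t}^{-1}(\beta)\in\mathsf{At}_{T_0}$ is the atom with $t\in\mathfrak{t}^{-1}(\beta)$ iff $\beta\le\mathfrak{t}(t)$; $\mathsf{compose}_{\mathfrak{t}}(A)=(Q,\delta',\iota')$ over $(\Sigma,T_1)$, $\delta'(q,\beta)=\delta(q,\mathfrak{t}^{-1}(\beta))$, $\iota'(\beta)=\iota(\mathfrak{t}^{-1}(\beta))$. (2) For $A=(Q,\delta,\iota)$ over $(\Sigma_0,T)$ and $\mathfrak{s}(p)=(Q_p,\delta_p,\iota_p)$ over $(\Sigma_1,T)$ for $p\in\Sigma_0$: $\hat\delta(q,\alpha)=\mathsf{accept}$ if $\delta(q,\alpha)=\mathsf{accept}$; $=(p,q')$ if $\delta(q,\alpha)=(p,q')$ and $\iota_p(\alpha)\ne\mathsf{accept}$; $=\hat\delta(q',\alpha)$ if $\delta(q,\alpha)=(p,q')$ and $\iota_p(\alpha)=\mathsf{accept}$; $=\mathsf{reject}$ otherwise (including non-terminating recursion). $\hat\iota(\alpha)=\hat\delta(q,\alpha)$ if $\iota(\alpha)=(p,q)$ and $\iota_p(\alpha)=\mathsf{accept}$, else $\iota(\alpha)$. $\mathsf{compose}^{\mathfrak{s}}(A)=(Q',\delta',\iota')$ over $(\Sigma_1,T)$, $Q'=\sum_{p\in\Sigma_0}Q_p\times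 Q$; for $q_p\in Q_p,q\in Q$: $\delta'((q_p,q),\alpha)=(p'',(q_p',q))$ if $\delta_p(q_p,\alpha)=(p'',q_p')$; $=(p'',(q_{p'},q'))$ if $\delta_p(q_p,\alpha)=\mathsf{accept}$, $\hat\delta(q,\alpha)=(p',q')$, $\iota_{p'}(\alpha)=(p'',q_{p'})$; $=\mathsf{accept}$ if $\delta_p(q_p,\alpha)=\mathsf{accept}=\hat\delta(q,\alpha)$; $=\mathsf{reject}$ otherwise. $\iota'(\alpha)=\mathsf{accept}$ if $\hat\iota(\alpha)=\mathsf{accept}$; $=(p'',(q_{p'},q))$ if $\hat\iota(\alpha)=(p',q)$ and $\iota_{p'}(\alpha)=(p'',q_{p'})$; $=\mathsf{reject}$ otherwise. (3) $\mathsf{compose}^{\mathfrak{s}}_{\mathfrak{t}}(A)=\mathsf{compose}^{\mathfrak{s}}(\mathsf{compose}_{\mathfrak{t}}(A))$. $L_k$: over $T=\{t_1,\dots,t_k\}$, $\Sigma=\{p_1,\dots,p_k\}$, with $\alpha_i=\{t_i\}$, $L_k$ is the set of guarded strings $\alpha_{i_1}\,p_1\,\alpha_{i_2}\,p_{i_1}\,\alpha_{i_3}\,p_{i_2}\cdots\alpha_{i_n}\,p_{i_{n-1}}\,\alpha_{i_n}$ with $n\ge1$, $i_j\in\{1,\dots,k\}$, $i_1\ne1$, and $i_j\ne i_{j+1}$ for all $j<n$ (the $j$-th atom $\alpha_{i_j}$, $j\le n$, is followed by $p_{i_{j-1}}$ where $i_0=1$, and the string ends with $\alpha_{i_n}$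 repeated). *)

theory Defs
  imports Main
begin

text \<open>Tests and letters are encoded as natural numbers; an atom over a finite
test set T is a subset of T (the tests that are true).  States live in a
datatype that is closed under the tagged pairing used by composition:
the composed state (p, q_p, q) of sum over p of Q_p x Q is encoded as CPair p q_p q.\<close>

datatype kstate = SBase nat | CPair nat kstate kstate

type_synonym atom = "nat set"

datatype outcome = Acc | Rej | Go nat kstate

record kat_aut =
  alph   :: "nat set"
  tests  :: "nat set"
  states :: "kstate set"
  delta  :: "kstate \<Rightarrow> atom \<Rightarrow> outcome"
  iota   :: "atom \<Rightarrow> outcome"

definition good_outcome :: "nat set \<Rightarrow> kstate set \<Rightarrow> outcome \<Rightarrow> bool" where
  "good_outcome S Q r \<longleftrightarrow> (r = Acc \<or> r = Rej \<or> (\<exists>p q. r = Go p q \<and> p \<in> S \<and> q \<in> Q))"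

definition wf_aut :: "kat_aut \<Rightarrow> bool" where
  "wf_aut A \<longleftrightarrow> finite (alph A) \<and> finite (tests A) \<and> finite (states A) \<and>
     (\<forall>q\<in>states A. \<forall>\<alpha>. \<alpha> \<subseteq> tests A \<longrightarrow> good_outcome (alph A) (states A) (delta A q \<alpha>)) \<and>
     (\<forall>\<alpha>. \<alpha> \<subseteq> tests A \<longrightarrow> good_outcome (alph A) (states A) (iota A \<alpha>))"

text \<open>A guarded string alpha_0 p_1 alpha_1 ... p_n alpha_n is encoded as
(alpha_0, [(p_1, alpha_1), ..., (p_n, alpha_n)]).\<close>
type_synonym gstring = "atom \<times> (nat \<times> atom) list"

inductive lang_of :: "kat_aut \<Rightarrow> (atom \<Rightarrow> outcome) \<Rightarrow> gstring \<Rightarrow> bool"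
  for A :: kat_aut where
  acc: "\<alpha> \<subseteq> tests A \<Longrightarrow> \<gamma> \<alpha> = Acc \<Longrightarrow> lang_of A \<gamma> (\<alpha>, [])"
| step: "\<alpha> \<subseteq> tests A \<Longrightarrow> \<gamma> \<alpha> = Go p q \<Longrightarrow> lang_of A (delta A q) (\<beta>, w)
          \<Longrightarrow> lang_of A \<gamma> (\<alpha>, (p, \<beta>) # w)"

definition L :: "kat_aut \<Rightarrow> gstring set" where
  "L A = {x. lang_of A (iota A) x}"

datatype bexp = BTrue | BFalse | BVar nat | BNot bexp | BAnd bexp bexp | BOr bexp bexp

fun bvars :: "bexp \<Rightarrow> nat set" where
  "bvars BTrue = {}" | "bvars BFalse = {}" | "bvars (BVar t) = {t}"
| "bvars (BNot b) = bvars b" | "bvars (BAnd b c) = bvars b \<union> bvars c"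
| "bvars (BOr b c) = bvars b \<union> bvars c"

text \<open>holds_at alpha b  is  alpha \<le> b.\<close>
fun holds_at :: "atom \<Rightarrow> bexp \<Rightarrow> bool" where
  "holds_at \<alpha> BTrue = True" | "holds_at \<alpha> BFalse = False"
| "holds_at \<alpha> (BVar t) = (t \<in> \<alpha>)"
| "holds_at \<alpha> (BNot b) = (\<not> holds_at \<alpha> b)"
| "holds_at \<alpha> (BAnd b c) = (holds_at \<alpha> b \<and> holds_at \<alpha> c)"
| "holds_at \<alpha> (BOr b c) = (holds_at \<alpha> b \<or> holds_at \<alpha> c)"

definition tinv :: "nat set \<Rightarrow> (nat \<Rightarrow> bexp) \<Rightarrow> atom \<Rightarrow> atom" where
  "tinv T0 \<tau> \<beta> = {t \<in> T0. holds_at \<beta> (\<tau> t)}"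

definition compose_t :: "nat set \<Rightarrow> (nat \<Rightarrow> bexp) \<Rightarrow> kat_aut \<Rightarrow> kat_aut" where
  "compose_t T1 \<tau> A =
     \<lparr> alph = alph A, tests = T1, states = states A,
       delta = (\<lambda>q \<beta>. delta A q (tinv (tests A) \<tau> \<beta>)),
       iota = (\<lambda>\<beta>. iota A (tinv (tests A) \<tau> \<beta>)) \<rparr>"

text \<open>The recursion defining hat-delta is rendered as
an inductive (functional) relation; when no finite derivation exists
(delta rejects, or the recursion does not terminate) the value is reject.\<close>
inductive hat_rel :: "kat_aut \<Rightarrow> (nat \<Rightarrow> kat_aut) \<Rightarrow> atom \<Rightarrow> kstate \<Rightarrow> outcome \<Rightarrow> bool"
  for A \<sigma> \<alpha> where
  h_acc: "delta A q \<alpha> = Acc \<Longrightarrow> hat_rel A \<sigma> \<alpha> q Acc"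
| h_go: "delta A q \<alpha> = Go p q' \<Longrightarrow> iota (\<sigma> p) \<alpha> \<noteq> Acc \<Longrightarrow> hat_rel A \<sigma> \<alpha> q (Go p q')"
| h_skip: "delta A q \<alpha> = Go p q' \<Longrightarrow> iota (\<sigma> p) \<alpha> = Acc \<Longrightarrow> hat_rel A \<sigma> \<alpha> q' r
           \<Longrightarrow> hat_rel A \<sigma> \<alpha> q r"

definition hat_delta :: "kat_aut \<Rightarrow> (nat \<Rightarrow> kat_aut) \<Rightarrow> kstate \<Rightarrow> atom \<Rightarrow> outcome" where
  "hat_delta A \<sigma> q \<alpha> = (if \<exists>r. hat_rel A \<sigma> \<alpha> q r then THE r. hat_rel A \<sigma> \<alpha> q r else Rej)"

definition hat_iota :: "kat_aut \<Rightarrow> (nat \<Rightarrow> kat_aut) \<Rightarrow> atom \<Rightarrow> outcome" where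
  "hat_iota A \<sigma> \<alpha> = (case iota A \<alpha> of
       Go p q \<Rightarrow> (if iota (\<sigma> p) \<alpha> = Acc then hat_delta A \<sigma> q \<alpha> else Go p q)
     | r \<Rightarrow> r)"

definition comp_delta :: "kat_aut \<Rightarrow> (nat \<Rightarrow> kat_aut) \<Rightarrow> kstate \<Rightarrow> atom \<Rightarrow> outcome" where
  "comp_delta A \<sigma> s \<alpha> = (case s of
      CPair p qp q \<Rightarrow>
        (case delta (\<sigma> p) qp \<alpha> of
           Go p'' qp' \<Rightarrow> Go p'' (CPair p qp' q)
         | Acc \<Rightarrow> (case hat_delta A \<sigma> q \<alpha> of
                     Acc \<Rightarrow> Acc
                   | Go p' q' \<Rightarrow> (case iota (\<sigma> p') \<alpha> of
                                    Go p'' qp' \<Rightarrow> Go p'' (CPair p' qp' q')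
                                  | _ \<Rightarrow> Rej)
                   | Rej \<Rightarrow> Rej)
         | Rej \<Rightarrow> Rej)
    | SBase _ \<Rightarrow> Rej)"

definition comp_iota :: "kat_aut \<Rightarrow> (nat \<Rightarrow> kat_aut) \<Rightarrow> atom \<Rightarrow> outcome" where
  "comp_iota A \<sigma> \<alpha> = (case hat_iota A \<sigma> \<alpha> of
       Acc \<Rightarrow> Acc
     | Go p' q \<Rightarrow> (case iota (\<sigma> p') \<alpha> of
                     Go p'' qp \<Rightarrow> Go p'' (CPair p' qp q)
                   | _ \<Rightarrow> Rej)
     | Rej \<Rightarrow> Rej)"

definition compose_s :: "nat set \<Rightarrow> (nat \<Rightarrow> kat_aut) \<Rightarrow> kat_aut \<Rightarrow> kat_aut" where
  "compose_s \<Sigma>1 \<sigma> A =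
     \<lparr> alph = \<Sigma>1, tests = tests A,
       states = {CPair p qp q | p qp q. p \<in> alph A \<and> qp \<in> states (\<sigma> p) \<and> q \<in> states A},
       delta = comp_delta A \<sigma>,
       iota = comp_iota A \<sigma> \<rparr>"

definition compose_st :: "nat set \<Rightarrow> nat set \<Rightarrow> (nat \<Rightarrow> kat_aut) \<Rightarrow> (nat \<Rightarrow> bexp) \<Rightarrow> kat_aut \<Rightarrow> kat_aut" where
  "compose_st \<Sigma>1 T1 \<sigma> \<tau> A = compose_s \<Sigma>1 \<sigma> (compose_t T1 \<tau> A)"

inductive_set Ck :: "nat \<Rightarrow> kat_aut set" for k :: nat where
  base: "wf_aut A \<Longrightarrow> card (states A) < k \<Longrightarrow> A \<in> Ck k"
| comp: "A \<in> Ck k \<Longrightarrow> finite T1 \<Longrightarrow> finite \<Sigma>1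
         \<Longrightarrow> (\<forall>t\<in>tests A. bvars (\<tau> t) \<subseteq> T1)
         \<Longrightarrow> (\<forall>p\<in>alph A. \<sigma> p \<in> Ck k \<and> alph (\<sigma> p) = \<Sigma>1 \<and> tests (\<sigma> p) = T1)
         \<Longrightarrow> compose_st \<Sigma>1 T1 \<sigma> \<tau> A \<in> Ck k"

text \<open>Tests t_i and letters p_i are encoded as the number i (1 \<le> i \<le> k), and the
atom alpha_i = {t_i} as {i}.  For the index sequence is = [i_1, ..., i_n], the
guarded string is alpha_{i_1} p_1 alpha_{i_2} p_{i_1} ... alpha_{i_n} p_{i_{n-1}} alpha_{i_n}.\<close>
definition gs_of :: "nat list \<Rightarrow> gstring" where
  "gs_of is = ({hd is}, zip (1 # butlast is) (map (\<lambda>i. {i}) (tl is @ [last is])))"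

definition Lk :: "nat \<Rightarrow> gstring set" where
  "Lk k = {gs_of is | is. is \<noteq> [] \<and> set is \<subseteq> {1..k} \<and> hd is \<noteq> 1 \<and>
                          (\<forall>j. Suc j < length is \<longrightarrow> is ! j \<noteq> is ! Suc j)}"

end

theory Submission
  imports Defs
begin

inductive zrel :: "(kstate \<Rightarrow> outcome) \<Rightarrow> (nat \<Rightarrow> bool) \<Rightarrow> kstate \<Rightarrow> outcome \<Rightarrow> bool"
  for d Z where
  z_acc: "d q = Acc \<Longrightarrow> zrel d Z q Acc"
| z_go: "d q = Go p q' \<Longrightarrow> \<not> Z p \<Longrightarrow> zrel d Z q (Go p q')"
| z_skip: "d q = Go p q' \<Longrightarrow> Z p \<Longrightarrow> zrel d Z q' r \<Longrightarrow> zrel d Z q r"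

lemma zrel_det: "zrel d Z q r1 \<Longrightarrow> zrel d Z q r2 \<Longrightarrow> r1 = r2"
proof (induction arbitrary: r2 rule: zrel.induct)
  case (z_acc q) from z_acc.prems z_acc.hyps show ?case
    by (cases rule: zrel.cases) simp_all
next
  case (z_go q p q') from z_go.prems z_go.hyps show ?case
    by (cases rule: zrel.cases) simp_all
next
  case (z_skip q p q' r) from z_skip.prems show ?case
  proof (cases rule: zrel.cases)
    case (z_skip p2 q2)
    then show ?thesis using z_skip.hyps z_skip.IH by simp
  qed (use z_skip.hyps in simp_all)
qed

definition iz :: "kat_aut \<Rightarrow> atom \<Rightarrow> (nat \<Rightarrow> bool) \<Rightarrow> outcome \<Rightarrow> bool" where
  "iz B \<alpha> Z r \<longleftrightarrow> (iota B \<alpha> = Acc \<and> r = Acc) \<or> (\<exists>z t. iota B \<alpha> = Go z t \<and> \<not> Z z \<and> r = Go z t)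
     \<or> (\<exists>z t. iota B \<alpha> = Go z t \<and> Z z \<and> zrel (\<lambda>x. delta B x \<alpha>) Z t r)"

lemma iz_det: "iz B \<alpha> Z r1 \<Longrightarrow> iz B \<alpha> Z r2 \<Longrightarrow> r1 = r2"
  unfolding iz_def using zrel_det[of "\<lambda>x. delta B x \<alpha>" Z]
  by (elim disjE exE conjE) simp_all

lemma hat_det: "hat_rel A \<sigma> \<alpha> q r1 \<Longrightarrow> hat_rel A \<sigma> \<alpha> q r2 \<Longrightarrow> r1 = r2"
proof (induction arbitrary: r2 rule: hat_rel.induct)
  case (h_acc q) from h_acc.prems h_acc.hyps show ?case
    by (cases rule: hat_rel.cases) simp_all
next
  case (h_go q p q') from h_go.prems h_go.hyps show ?case
    by (cases rule: hat_rel.cases) simp_all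
next
  case (h_skip q p q' r) from h_skip.prems show ?case
  proof (cases rule: hat_rel.cases)
    case (h_skip p2 q2)
    then show ?thesis using h_skip.hyps h_skip.IH by simp
  qed (use h_skip.hyps in simp_all)
qed

lemma hat_delta_rel: "hat_delta A \<sigma> q \<alpha> = r \<Longrightarrow> r \<noteq> Rej \<Longrightarrow> hat_rel A \<sigma> \<alpha> q r"
proof -
  assume a: "hat_delta A \<sigma> q \<alpha> = r" "r \<noteq> Rej"
  then have ex: "\<exists>r. hat_rel A \<sigma> \<alpha> q r" unfolding hat_delta_def by (cases "\<exists>r. hat_rel A \<sigma> \<alpha> q r") auto
  then obtain r0 where r0: "hat_rel A \<sigma> \<alpha> q r0" by blast
  have "(THE r. hat_rel A \<sigma> \<alpha> q r) = r0" using r0 hat_det by blast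
  then show ?thesis using a ex r0 unfolding hat_delta_def by simp
qed

lemma hat_zrel:
  assumes "hat_rel A \<sigma> \<alpha> q r"
  shows "(r = Acc \<longrightarrow> zrel (\<lambda>x. delta A x \<alpha>) (\<lambda>p'. iz (\<sigma> p') \<alpha> Z Acc) q Acc) \<and>
   (\<forall>p' q'. r = Go p' q' \<longrightarrow>
      (iz (\<sigma> p') \<alpha> Z Acc \<longrightarrow> (\<forall>r'. zrel (\<lambda>x. delta A x \<alpha>) (\<lambda>p'. iz (\<sigma> p') \<alpha> Z Acc) q' r'
            \<longrightarrow> zrel (\<lambda>x. delta A x \<alpha>) (\<lambda>p'. iz (\<sigma> p') \<alpha> Z Acc) q r')) \<and>
      (\<not> iz (\<sigma> p') \<alpha> Z Acc \<longrightarrow> zrel (\<lambda>x. delta A x \<alpha>) (\<lambda>p'. iz (\<sigma> p') \<alpha> Z Acc) q (Go p' q')))"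
  using assms
proof (induction rule: hat_rel.induct)
  case (h_acc q) then show ?case by (simp add: zrel.z_acc)
next
  case (h_go q p q') then show ?case
    by (auto intro: zrel.z_go zrel.z_skip[where p=p and q'=q'])
next
  case (h_skip q p q' r)
  have "iz (\<sigma> p) \<alpha> Z Acc" using h_skip.hyps(2) unfolding iz_def by simp
  then show ?case using h_skip.IH h_skip.hyps(1)
    by (auto intro: zrel.z_skip[where p=p and q'=q'])
qed

lemma lift_inner:
  assumes "zrel (\<lambda>x. delta (\<sigma> p) x \<alpha>) Z qp r"
  shows "\<forall>b t. r = Go b t \<longrightarrow> zrel (\<lambda>s. comp_delta A \<sigma> s \<alpha>) Z (CPair p qp q) (Go b (CPair p t q))"
  using assms
proof (induction rule: zrel.induct)
  case (z_acc q) then show ?case by simp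
next
  case (z_go x b t) then show ?case by (simp add: zrel.z_go comp_delta_def)
next
  case (z_skip x b0 x' r)
  then show ?case by (auto intro: zrel.z_skip[where p=b0 and q'="CPair p x' q"] simp: comp_delta_def)
qed

abbreviation Zo :: "(nat \<Rightarrow> kat_aut) \<Rightarrow> atom \<Rightarrow> (nat \<Rightarrow> bool) \<Rightarrow> nat \<Rightarrow> bool" where
  "Zo \<sigma> \<alpha> Z \<equiv> (\<lambda>p'. iz (\<sigma> p') \<alpha> Z Acc)"

definition DC :: "kat_aut \<Rightarrow> (nat \<Rightarrow> kat_aut) \<Rightarrow> atom \<Rightarrow> (nat \<Rightarrow> bool) \<Rightarrow> nat \<Rightarrow> kstate \<Rightarrow> kstate \<Rightarrow> outcome \<Rightarrow> bool" where
 "DC A \<sigma> \<alpha> Z p qp q r \<longleftrightarrow>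
   (\<exists>b qp'. r = Go b (CPair p qp' q) \<and> zrel (\<lambda>x. delta (\<sigma> p) x \<alpha>) Z qp (Go b qp'))
  \<or> (zrel (\<lambda>x. delta (\<sigma> p) x \<alpha>) Z qp Acc \<and>
      ((r = Acc \<and> zrel (\<lambda>x. delta A x \<alpha>) (Zo \<sigma> \<alpha> Z) q Acc) \<or>
       (\<exists>p' q' b qp''. r = Go b (CPair p' qp'' q') \<and> zrel (\<lambda>x. delta A x \<alpha>) (Zo \<sigma> \<alpha> Z) q (Go p' q')
           \<and> iz (\<sigma> p') \<alpha> Z (Go b qp''))))"

lemma decomp:
  assumes "zrel (\<lambda>s. comp_delta A \<sigma> s \<alpha>) Z s r"
  shows "\<forall>p qp q. s = CPair p qp q \<longrightarrow> DC A \<sigma> \<alpha> Z p qp q r"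
  using assms
proof (induction rule: zrel.induct)
  case (z_acc s)
  show ?case
  proof (intro allI impI)
    fix p qp q assume s: "s = CPair p qp q"
    have h: "delta (\<sigma> p) qp \<alpha> = Acc \<and> hat_delta A \<sigma> q \<alpha> = Acc"
      using z_acc s unfolding comp_delta_def
      by (auto split: outcome.splits)
    then have "hat_rel A \<sigma> \<alpha> q Acc" using hat_delta_rel by blast
    then have "zrel (\<lambda>x. delta A x \<alpha>) (Zo \<sigma> \<alpha> Z) q Acc" using hat_zrel[of A \<sigma> \<alpha> q Acc Z] by simp
    then show "DC A \<sigma> \<alpha> Z p qp q Acc" unfolding DC_def using h zrel.z_acc by metis
  qed
next
  case (z_go s b t)
  show ?case
  proof (intro allI impI)
    fix p qp q assume s: "s = CPair p qp q"
    show "DC A \<sigma> \<alpha> Z p qp q (Go b t)"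
    proof (cases "delta (\<sigma> p) qp \<alpha>")
      case Acc
      then obtain p' q' qp'' where h: "hat_delta A \<sigma> q \<alpha> = Go p' q'" "iota (\<sigma> p') \<alpha> = Go b qp''"
        "t = CPair p' qp'' q'"
        using z_go s unfolding comp_delta_def
        by (auto split: outcome.splits)
      have hr: "hat_rel A \<sigma> \<alpha> q (Go p' q')" using h(1) hat_delta_rel by blast
      have niz: "\<not> iz (\<sigma> p') \<alpha> Z Acc" using h(2) z_go.hyps(2) unfolding iz_def by simp
      have "zrel (\<lambda>x. delta A x \<alpha>) (Zo \<sigma> \<alpha> Z) q (Go p' q')"
        using hat_zrel[OF hr, of Z] niz by simp
      moreover have "iz (\<sigma> p') \<alpha> Z (Go b qp'')" using h(2) z_go.hyps(2) unfolding iz_def by simp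
      moreover have "zrel (\<lambda>x. delta (\<sigma> p) x \<alpha>) Z qp Acc" using Acc zrel.z_acc by metis
      ultimately show ?thesis unfolding DC_def using h(3) by blast
    next
      case Rej
      then show ?thesis using z_go s unfolding comp_delta_def by simp
    next
      case (Go b' qp')
      then have "b' = b" "t = CPair p qp' q" using z_go s unfolding comp_delta_def by simp_all
      then show ?thesis unfolding DC_def using Go z_go.hyps(2) zrel.z_go by metis
    qed
  qed
next
  case (z_skip s b t r)
  show ?case
  proof (intro allI impI)
    fix p qp q assume s: "s = CPair p qp q"
    show "DC A \<sigma> \<alpha> Z p qp q r"
    proof (cases "delta (\<sigma> p) qp \<alpha>")
      case Acc
      then obtain p' q' qp'' where h: "hat_delta A \<sigma> q \<alpha> = Go p' q'" "iota (\<sigma> p') \<alpha> = Go b qp''"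
        "t = CPair p' qp'' q'"
        using z_skip s unfolding comp_delta_def
        by (auto split: outcome.splits)
      have hr: "hat_rel A \<sigma> \<alpha> q (Go p' q')" using h(1) hat_delta_rel by blast
      have acc: "zrel (\<lambda>x. delta (\<sigma> p) x \<alpha>) Z qp Acc" using Acc zrel.z_acc by metis
      have IH: "DC A \<sigma> \<alpha> Z p' qp'' q' r" using z_skip.IH h(3) by blast
      show ?thesis
      proof (cases "\<exists>b qp'. r = Go b (CPair p' qp' q') \<and> zrel (\<lambda>x. delta (\<sigma> p') x \<alpha>) Z qp'' (Go b qp')")
        case True
        then obtain b' qp2 where b': "r = Go b' (CPair p' qp2 q')" "zrel (\<lambda>x. delta (\<sigma> p') x \<alpha>) Z qp'' (Go b' qp2)"
          by blast
        have niz: "\<not> iz (\<sigma> p') \<alpha> Z Acc"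
        proof
          assume "iz (\<sigma> p') \<alpha> Z Acc"
          then have "zrel (\<lambda>x. delta (\<sigma> p') x \<alpha>) Z qp'' Acc" using h(2) unfolding iz_def by simp
          then show False using b'(2) zrel_det by fastforce
        qed
        have "zrel (\<lambda>x. delta A x \<alpha>) (Zo \<sigma> \<alpha> Z) q (Go p' q')"
          using hat_zrel[OF hr, of Z] niz by simp
        moreover have "iz (\<sigma> p') \<alpha> Z (Go b' qp2)" using h(2) z_skip.hyps(2) b'(2) unfolding iz_def by simp
        ultimately show ?thesis unfolding DC_def using acc b'(1) by blast
      next
        case False
        then have F: "zrel (\<lambda>x. delta (\<sigma> p') x \<alpha>) Z qp'' Acc \<and>
      ((r = Acc \<and> zrel (\<lambda>x. delta A x \<alpha>) (Zo \<sigma> \<alpha> Z) q' Acc) \<or>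
       (\<exists>p2 q2 b2 qp2. r = Go b2 (CPair p2 qp2 q2) \<and> zrel (\<lambda>x. delta A x \<alpha>) (Zo \<sigma> \<alpha> Z) q' (Go p2 q2)
           \<and> iz (\<sigma> p2) \<alpha> Z (Go b2 qp2)))" using IH unfolding DC_def by blast
        then have izp: "iz (\<sigma> p') \<alpha> Z Acc" using h(2) z_skip.hyps(2) unfolding iz_def by simp
        have tr: "\<forall>r'. zrel (\<lambda>x. delta A x \<alpha>) (Zo \<sigma> \<alpha> Z) q' r' \<longrightarrow> zrel (\<lambda>x. delta A x \<alpha>) (Zo \<sigma> \<alpha> Z) q r'"
          using hat_zrel[OF hr, of Z] izp by simp
        show ?thesis unfolding DC_def using F tr acc by blast
      qed
    next
      case Rej
      then show ?thesis using z_skip s unfolding comp_delta_def by simp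
    next
      case (Go b' qp')
      then have bt: "b' = b" "t = CPair p qp' q" using z_skip s unfolding comp_delta_def by simp_all
      have IH: "DC A \<sigma> \<alpha> Z p qp' q r" using z_skip.IH bt by blast
      have st: "\<And>r'. zrel (\<lambda>x. delta (\<sigma> p) x \<alpha>) Z qp' r' \<Longrightarrow> zrel (\<lambda>x. delta (\<sigma> p) x \<alpha>) Z qp r'"
        using Go bt z_skip.hyps(2) zrel.z_skip by metis
      show ?thesis using IH st unfolding DC_def by blast
    qed
  qed
qed

definition fam :: "nat \<Rightarrow> kat_aut \<Rightarrow> bool" where
"fam k A \<longleftrightarrow> (\<exists>(a::nat \<Rightarrow> atom) (Z::nat \<Rightarrow> nat \<Rightarrow> bool) S (l::kstate \<Rightarrow> nat).
   S \<subseteq> states A \<and> (\<forall>s\<in>S. l s \<in> {1..k}) \<and> (\<forall>j\<in>{1..k}. \<exists>s\<in>S. l s = j) \<and>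
   (\<forall>s\<in>S. zrel (\<lambda>q. delta A q (a (l s))) (Z (l s)) s Acc) \<and>
   (\<forall>s\<in>S. \<forall>i\<in>{1..k}. i \<noteq> l s \<longrightarrow> (\<exists>b s'. s' \<in> S \<and> l s' = i \<and> zrel (\<lambda>q. delta A q (a i)) (Z i) s (Go b s'))) \<and>
   (\<forall>s\<in>S. \<forall>s2\<in>S. \<forall>i\<in>{1..k}. \<forall>b t b2 t2. l s \<noteq> l s2 \<longrightarrow> zrel (\<lambda>q. delta A q (a i)) (Z i) s (Go b t)
        \<longrightarrow> zrel (\<lambda>q. delta A q (a i)) (Z i) s2 (Go b2 t2) \<longrightarrow> b \<noteq> b2))"

lemma fam_compose_t: "fam k (compose_t T1 \<tau> A) \<Longrightarrow> fam k A"
proof -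
  assume "fam k (compose_t T1 \<tau> A)"
  then obtain a Z S l where H:
   "S \<subseteq> states (compose_t T1 \<tau> A)" "(\<forall>s\<in>S. l s \<in> {1..k})" "(\<forall>j\<in>{1..k}. \<exists>s\<in>S. l s = j)"
   "(\<forall>s\<in>S. zrel (\<lambda>q. delta (compose_t T1 \<tau> A) q (a (l s))) (Z (l s)) s Acc)"
   "(\<forall>s\<in>S. \<forall>i\<in>{1..k}. i \<noteq> l s \<longrightarrow> (\<exists>b s'. s' \<in> S \<and> l s' = i \<and> zrel (\<lambda>q. delta (compose_t T1 \<tau> A) q (a i)) (Z i) s (Go b s')))"
   "(\<forall>s\<in>S. \<forall>s2\<in>S. \<forall>i\<in>{1..k}. \<forall>b t b2 t2. l s \<noteq> l s2 \<longrightarrow> zrel (\<lambda>q. delta (compose_t T1 \<tau> A) q (a i)) (Z i) s (Go b t)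
        \<longrightarrow> zrel (\<lambda>q. delta (compose_t T1 \<tau> A) q (a i)) (Z i) s2 (Go b2 t2) \<longrightarrow> b \<noteq> b2)"
    unfolding fam_def by blast
  have d: "\<And>i. (\<lambda>q. delta (compose_t T1 \<tau> A) q (a i)) = (\<lambda>q. delta A q (tinv (tests A) \<tau> (a i)))"
    by (simp add: compose_t_def)
  have st: "states (compose_t T1 \<tau> A) = states A" by (simp add: compose_t_def)
  show ?thesis unfolding fam_def
    apply (rule exI[of _ "\<lambda>i. tinv (tests A) \<tau> (a i)"])
    apply (rule exI[of _ Z])
    apply (rule exI[of _ S])
    apply (rule exI[of _ l])
    using H unfolding d st by blast
qed

lemma fam_base: "fam k A \<Longrightarrow> finite (states A) \<Longrightarrow> card (states A) < k \<Longrightarrow> False"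
proof -
  assume f: "fam k A" and fin: "finite (states A)" and c: "card (states A) < k"
  then obtain S l where S: "S \<subseteq> states A" "\<forall>j\<in>{1..k}. \<exists>s\<in>S. l s = j"
    unfolding fam_def by blast
  have "{1..k} \<subseteq> l ` S" using S(2) by force
  then have "card {1..k} \<le> card (l ` S)" using fin S(1) by (meson card_mono finite_imageI finite_subset)
  also have "\<dots> \<le> card S" using card_image_le fin S(1) finite_subset by blast
  also have "\<dots> \<le> card (states A)" using fin S(1) card_mono by blast
  finally show False using c by simp
qed

lemma core:
  assumes k: "0 < k" and F: "fam k (compose_s \<Sigma>1 \<sigma> A)"
  shows "(\<exists>p\<in>alph A. fam k (\<sigma> p)) \<or> fam k A"
proof -
  have dC: "\<And>\<alpha>. (\<lambda>q. delta (compose_s \<Sigma>1 \<sigma> A) q \<alpha>) = (\<lambda>q. comp_delta A \<sigma> q \<alpha>)"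
    by (simp add: compose_s_def)
  have stC: "states (compose_s \<Sigma>1 \<sigma> A) = {CPair p qp q | p qp q. p \<in> alph A \<and> qp \<in> states (\<sigma> p) \<and> q \<in> states A}"
    by (simp add: compose_s_def)
  obtain a Z S l where H:
   "S \<subseteq> states (compose_s \<Sigma>1 \<sigma> A)" "(\<forall>s\<in>S. l s \<in> {1..k})" "(\<forall>j\<in>{1..k}. \<exists>s\<in>S. l s = j)"
   "(\<forall>s\<in>S. zrel (\<lambda>q. delta (compose_s \<Sigma>1 \<sigma> A) q (a (l s))) (Z (l s)) s Acc)"
   "(\<forall>s\<in>S. \<forall>i\<in>{1..k}. i \<noteq> l s \<longrightarrow> (\<exists>b s'. s' \<in> S \<and> l s' = i \<and> zrel (\<lambda>q. delta (compose_s \<Sigma>1 \<sigma> A) q (a i)) (Z i) s (Go b s')))"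
   "(\<forall>s\<in>S. \<forall>s2\<in>S. \<forall>i\<in>{1..k}. \<forall>b t b2 t2. l s \<noteq> l s2 \<longrightarrow> zrel (\<lambda>q. delta (compose_s \<Sigma>1 \<sigma> A) q (a i)) (Z i) s (Go b t)
        \<longrightarrow> zrel (\<lambda>q. delta (compose_s \<Sigma>1 \<sigma> A) q (a i)) (Z i) s2 (Go b2 t2) \<longrightarrow> b \<noteq> b2)"
    using F unfolding fam_def by blast
  note H = H[unfolded dC stC]
  have SC: "\<And>s. s \<in> S \<Longrightarrow> \<exists>p qp q. s = CPair p qp q \<and> p \<in> alph A \<and> qp \<in> states (\<sigma> p) \<and> q \<in> states A"
    using H(1) by blast
  have ACC: "\<And>p qp q. CPair p qp q \<in> S \<Longrightarrow>
      zrel (\<lambda>x. delta (\<sigma> p) x (a (l (CPair p qp q)))) (Z (l (CPair p qp q))) qp Acc \<and>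
      zrel (\<lambda>x. delta A x (a (l (CPair p qp q)))) (Zo \<sigma> (a (l (CPair p qp q))) (Z (l (CPair p qp q)))) q Acc"
  proof -
    fix p qp q assume s: "CPair p qp q \<in> S"
    then have "zrel (\<lambda>x. comp_delta A \<sigma> x (a (l (CPair p qp q)))) (Z (l (CPair p qp q))) (CPair p qp q) Acc"
      using H(4) by blast
    then have "DC A \<sigma> (a (l (CPair p qp q))) (Z (l (CPair p qp q))) p qp q Acc" using decomp by blast
    then show "?thesis p qp q" unfolding DC_def by auto
  qed
  have STEP: "\<And>p qp q i. CPair p qp q \<in> S \<Longrightarrow> i \<in> {1..k} \<Longrightarrow> i \<noteq> l (CPair p qp q) \<Longrightarrow>
     \<exists>b s'. s' \<in> S \<and> l s' = i \<and> zrel (\<lambda>x. comp_delta A \<sigma> x (a i)) (Z i) (CPair p qp q) (Go b s')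
        \<and> DC A \<sigma> (a i) (Z i) p qp q (Go b s')"
    using H(5) decomp by blast
  show ?thesis
  proof (cases "\<exists>p q. \<forall>j\<in>{1..k}. \<exists>qp. CPair p qp q \<in> S \<and> l (CPair p qp q) = j")
    case True
    then obtain p q where cl: "\<forall>j\<in>{1..k}. \<exists>qp. CPair p qp q \<in> S \<and> l (CPair p qp q) = j" by blast
    then obtain qp0 where "CPair p qp0 q \<in> S" using k by force
    then have pA: "p \<in> alph A" using SC by blast
    have "fam k (\<sigma> p)" unfolding fam_def
    proof (intro exI conjI)
      show "{qp. CPair p qp q \<in> S} \<subseteq> states (\<sigma> p)" using SC by blast
      show "\<forall>s\<in>{qp. CPair p qp q \<in> S}. l (CPair p s q) \<in> {1..k}" using H(2) by blast
      show "\<forall>j\<in>{1..k}. \<exists>s\<in>{qp. CPair p qp q \<in> S}. l (CPair p s q) = j" using cl by blast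
      show "\<forall>s\<in>{qp. CPair p qp q \<in> S}. zrel (\<lambda>qa. delta (\<sigma> p) qa (a (l (CPair p s q)))) (Z (l (CPair p s q))) s Acc"
        using ACC by blast
      show "\<forall>s\<in>{qp. CPair p qp q \<in> S}. \<forall>i\<in>{1..k}. i \<noteq> l (CPair p s q) \<longrightarrow>
        (\<exists>b s'. s' \<in> {qp. CPair p qp q \<in> S} \<and> l (CPair p s' q) = i \<and> zrel (\<lambda>qa. delta (\<sigma> p) qa (a i)) (Z i) s (Go b s'))"
      proof (intro ballI impI)
        fix qp i assume qp: "qp \<in> {qp. CPair p qp q \<in> S}" and i: "i \<in> {1..k}" "i \<noteq> l (CPair p qp q)"
        obtain b s' where bs: "s' \<in> S" "l s' = i" "DC A \<sigma> (a i) (Z i) p qp q (Go b s')"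
          using STEP qp i by blast
        obtain qp2 where qp2: "CPair p qp2 q \<in> S" "l (CPair p qp2 q) = i" using cl i by blast
        have acc2: "zrel (\<lambda>x. delta A x (a i)) (Zo \<sigma> (a i) (Z i)) q Acc" using ACC[OF qp2(1)] qp2(2) by simp
        have notout: "\<not> zrel (\<lambda>x. delta A x (a i)) (Zo \<sigma> (a i) (Z i)) q (Go p' q')" for p' q'
          using acc2 zrel_det by fastforce
        then obtain qp' where "Go b s' = Go b (CPair p qp' q)" "zrel (\<lambda>x. delta (\<sigma> p) x (a i)) (Z i) qp (Go b qp')"
          using bs(3) unfolding DC_def by blast
        then show "\<exists>b s'. s' \<in> {qp. CPair p qp q \<in> S} \<and> l (CPair p s' q) = i \<and> zrel (\<lambda>qa. delta (\<sigma> p) qa (a i)) (Z i) qp (Go b s')"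
          using bs(1,2) by auto
      qed
      show "\<forall>s\<in>{qp. CPair p qp q \<in> S}. \<forall>s2\<in>{qp. CPair p qp q \<in> S}. \<forall>i\<in>{1..k}. \<forall>b t b2 t2.
         l (CPair p s q) \<noteq> l (CPair p s2 q) \<longrightarrow> zrel (\<lambda>qa. delta (\<sigma> p) qa (a i)) (Z i) s (Go b t) \<longrightarrow>
           zrel (\<lambda>qa. delta (\<sigma> p) qa (a i)) (Z i) s2 (Go b2 t2) \<longrightarrow> b \<noteq> b2"
      proof (intro ballI allI impI)
        fix qp qp2 i b t b2 t2
        assume m: "qp \<in> {qp. CPair p qp q \<in> S}" "qp2 \<in> {qp. CPair p qp q \<in> S}" "i \<in> {1..k}"
          "l (CPair p qp q) \<noteq> l (CPair p qp2 q)" "zrel (\<lambda>qa. delta (\<sigma> p) qa (a i)) (Z i) qp (Go b t)"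
          "zrel (\<lambda>qa. delta (\<sigma> p) qa (a i)) (Z i) qp2 (Go b2 t2)"
        have "zrel (\<lambda>s. comp_delta A \<sigma> s (a i)) (Z i) (CPair p qp q) (Go b (CPair p t q))"
          using lift_inner[of \<sigma> p "a i" "Z i" qp "Go b t" A q] m(5) by blast
        moreover have "zrel (\<lambda>s. comp_delta A \<sigma> s (a i)) (Z i) (CPair p qp2 q) (Go b2 (CPair p t2 q))"
          using lift_inner[of \<sigma> p "a i" "Z i" qp2 "Go b2 t2" A q] m(6) by blast
        ultimately show "b \<noteq> b2" using H(6) m(1-4) by blast
      qed
    qed
    then show ?thesis using pA by blast
  next
    case False
    then have miss: "\<And>p q. \<exists>j\<in>{1..k}. \<forall>qp. CPair p qp q \<in> S \<longrightarrow> l (CPair p qp q) \<noteq> j" by blast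
    have OUT: "\<And>p qp q i. CPair p qp q \<in> S \<Longrightarrow> i \<in> {1..k} \<Longrightarrow> i \<noteq> l (CPair p qp q) \<Longrightarrow>
        (\<forall>qp2. CPair p qp2 q \<in> S \<longrightarrow> l (CPair p qp2 q) \<noteq> i) \<Longrightarrow>
        \<exists>b p' q' qp''. CPair p' qp'' q' \<in> S \<and> l (CPair p' qp'' q') = i
          \<and> zrel (\<lambda>x. comp_delta A \<sigma> x (a i)) (Z i) (CPair p qp q) (Go b (CPair p' qp'' q'))
          \<and> zrel (\<lambda>x. delta A x (a i)) (Zo \<sigma> (a i) (Z i)) q (Go p' q')
          \<and> iz (\<sigma> p') (a i) (Z i) (Go b qp'')"
    proof -
      fix p qp q i assume s: "CPair p qp q \<in> S" and i: "i \<in> {1..k}" "i \<noteq> l (CPair p qp q)"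
        and nm: "\<forall>qp2. CPair p qp2 q \<in> S \<longrightarrow> l (CPair p qp2 q) \<noteq> i"
      obtain b s' where bs: "s' \<in> S" "l s' = i" "zrel (\<lambda>x. comp_delta A \<sigma> x (a i)) (Z i) (CPair p qp q) (Go b s')"
         "DC A \<sigma> (a i) (Z i) p qp q (Go b s')"
        using STEP[OF s i] by blast
      have "\<not> (\<exists>b' qp'. Go b s' = Go b' (CPair p qp' q))" using nm bs(1,2) by auto
      then show "?thesis p qp q i" using bs unfolding DC_def by blast
    qed
    have U2: "\<And>p qp q qp2. CPair p qp q \<in> S \<Longrightarrow> CPair p qp2 q \<in> S \<Longrightarrow> l (CPair p qp q) = l (CPair p qp2 q)"
    proof (rule ccontr)
      fix p qp q qp2 assume s: "CPair p qp q \<in> S" "CPair p qp2 q \<in> S" "l (CPair p qp q) \<noteq> l (CPair p qp2 q)"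
      obtain i where i: "i \<in> {1..k}" "\<forall>qp. CPair p qp q \<in> S \<longrightarrow> l (CPair p qp q) \<noteq> i" using miss by blast
      obtain b p' q' qp'' where o1: "CPair p' qp'' q' \<in> S" 
          "zrel (\<lambda>x. comp_delta A \<sigma> x (a i)) (Z i) (CPair p qp q) (Go b (CPair p' qp'' q'))"
          "zrel (\<lambda>x. delta A x (a i)) (Zo \<sigma> (a i) (Z i)) q (Go p' q')"
          "iz (\<sigma> p') (a i) (Z i) (Go b qp'')"
        using OUT[OF s(1) i(1)] i(2) s(1) by blast
      obtain b2 p2 q2 qp2' where o2: "CPair p2 qp2' q2 \<in> S" 
          "zrel (\<lambda>x. comp_delta A \<sigma> x (a i)) (Z i) (CPair p qp2 q) (Go b2 (CPair p2 qp2' q2))"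
          "zrel (\<lambda>x. delta A x (a i)) (Zo \<sigma> (a i) (Z i)) q (Go p2 q2)"
          "iz (\<sigma> p2) (a i) (Z i) (Go b2 qp2')"
        using OUT[OF s(2) i(1)] i(2) s(2) by blast
      have "p2 = p'" using o1(3) o2(3) zrel_det by fastforce
      then have "b2 = b" using o1(4) o2(4) iz_det by fastforce
      moreover have "b \<noteq> b2" using H(6) s o1(2) o2(2) i(1) by blast
      ultimately show False by simp
    qed
    have ALLOUT: "\<And>p qp q i. CPair p qp q \<in> S \<Longrightarrow> i \<in> {1..k} \<Longrightarrow> i \<noteq> l (CPair p qp q) \<Longrightarrow>
        \<exists>b p' q' qp''. CPair p' qp'' q' \<in> S \<and> l (CPair p' qp'' q') = i
          \<and> zrel (\<lambda>x. comp_delta A \<sigma> x (a i)) (Z i) (CPair p qp q) (Go b (CPair p' qp'' q'))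
          \<and> zrel (\<lambda>x. delta A x (a i)) (Zo \<sigma> (a i) (Z i)) q (Go p' q')
          \<and> iz (\<sigma> p') (a i) (Z i) (Go b qp'')"
    proof -
      fix p qp q i assume s: "CPair p qp q \<in> S" and i: "i \<in> {1..k}" "i \<noteq> l (CPair p qp q)"
      have "\<forall>qp2. CPair p qp2 q \<in> S \<longrightarrow> l (CPair p qp2 q) \<noteq> i" using U2[OF s] i(2) by metis
      then show "?thesis p qp q i" using OUT[OF s i] by blast
    qed
    have U4: "\<And>p qp q p2 qp2. CPair p qp q \<in> S \<Longrightarrow> CPair p2 qp2 q \<in> S \<Longrightarrow> l (CPair p qp q) = l (CPair p2 qp2 q)"
    proof (rule ccontr)
      fix p qp q p2 qp2 assume s: "CPair p qp q \<in> S" "CPair p2 qp2 q \<in> S" "l (CPair p qp q) \<noteq> l (CPair p2 qp2 q)"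
      let ?j = "l (CPair p qp q)"
      have j: "?j \<in> {1..k}" using H(2) s(1) by blast
      have a1: "zrel (\<lambda>x. delta A x (a ?j)) (Zo \<sigma> (a ?j) (Z ?j)) q Acc" using ACC[OF s(1)] by blast
      obtain p' q' where "zrel (\<lambda>x. delta A x (a ?j)) (Zo \<sigma> (a ?j) (Z ?j)) q (Go p' q')"
        using ALLOUT[OF s(2) j] s(3) by metis
      then show False using a1 zrel_det by fastforce
    qed
    define l2 where "l2 q = l (SOME s. s \<in> S \<and> (\<exists>p qp. s = CPair p qp q))" for q
    have Lq: "\<And>p qp q. CPair p qp q \<in> S \<Longrightarrow> l2 q = l (CPair p qp q)"
    proof -
      fix p qp q assume s: "CPair p qp q \<in> S"
      then have "\<exists>s. s \<in> S \<and> (\<exists>p qp. s = CPair p qp q)" by blast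
      then have "(SOME s. s \<in> S \<and> (\<exists>p qp. s = CPair p qp q)) \<in> S \<and> (\<exists>p qp. (SOME s. s \<in> S \<and> (\<exists>p qp. s = CPair p qp q)) = CPair p qp q)"
        by (rule someI_ex)
      then show "l2 q = l (CPair p qp q)" unfolding l2_def using U4 s by metis
    qed
    have "fam k A" unfolding fam_def
    proof (intro exI conjI)
      show "{q. \<exists>p qp. CPair p qp q \<in> S} \<subseteq> states A" using SC by blast
      show "\<forall>q\<in>{q. \<exists>p qp. CPair p qp q \<in> S}. l2 q \<in> {1..k}" using H(2) Lq by fastforce
      show "\<forall>j\<in>{1..k}. \<exists>q\<in>{q. \<exists>p qp. CPair p qp q \<in> S}. l2 q = j"
      proof
        fix j assume "j \<in> {1..k}"
        then obtain s where "s \<in> S" "l s = j" using H(3) by blast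
        then show "\<exists>q\<in>{q. \<exists>p qp. CPair p qp q \<in> S}. l2 q = j" using SC Lq by fastforce
      qed
      show "\<forall>q\<in>{q. \<exists>p qp. CPair p qp q \<in> S}. zrel (\<lambda>qa. delta A qa (a (l2 q))) (Zo \<sigma> (a (l2 q)) (Z (l2 q))) q Acc"
        using ACC Lq by fastforce
      show "\<forall>q\<in>{q. \<exists>p qp. CPair p qp q \<in> S}. \<forall>i\<in>{1..k}. i \<noteq> l2 q \<longrightarrow>
          (\<exists>b s'. s' \<in> {q. \<exists>p qp. CPair p qp q \<in> S} \<and> l2 s' = i \<and> zrel (\<lambda>qa. delta A qa (a i)) (Zo \<sigma> (a i) (Z i)) q (Go b s'))"
      proof (intro ballI impI)
        fix q i assume q: "q \<in> {q. \<exists>p qp. CPair p qp q \<in> S}" and i: "i \<in> {1..k}" "i \<noteq> l2 q"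
        then obtain p qp where s: "CPair p qp q \<in> S" by blast
        then have "i \<noteq> l (CPair p qp q)" using i Lq by metis
        then obtain b p' q' qp'' where o: "CPair p' qp'' q' \<in> S" "l (CPair p' qp'' q') = i"
          "zrel (\<lambda>x. delta A x (a i)) (Zo \<sigma> (a i) (Z i)) q (Go p' q')"
          using ALLOUT[OF s i(1)] by blast
        then show "\<exists>b s'. s' \<in> {q. \<exists>p qp. CPair p qp q \<in> S} \<and> l2 s' = i \<and> zrel (\<lambda>qa. delta A qa (a i)) (Zo \<sigma> (a i) (Z i)) q (Go b s')"
          using Lq by fastforce
      qed
      show "\<forall>q\<in>{q. \<exists>p qp. CPair p qp q \<in> S}. \<forall>q2\<in>{q. \<exists>p qp. CPair p qp q \<in> S}. \<forall>i\<in>{1..k}. \<forall>b t b2 t2.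
         l2 q \<noteq> l2 q2 \<longrightarrow> zrel (\<lambda>qa. delta A qa (a i)) (Zo \<sigma> (a i) (Z i)) q (Go b t) \<longrightarrow>
           zrel (\<lambda>qa. delta A qa (a i)) (Zo \<sigma> (a i) (Z i)) q2 (Go b2 t2) \<longrightarrow> b \<noteq> b2"
      proof (intro ballI allI impI)
        fix q q2 i b t b2 t2
        assume m: "q \<in> {q. \<exists>p qp. CPair p qp q \<in> S}" "q2 \<in> {q. \<exists>p qp. CPair p qp q \<in> S}" "i \<in> {1..k}"
          "l2 q \<noteq> l2 q2" "zrel (\<lambda>qa. delta A qa (a i)) (Zo \<sigma> (a i) (Z i)) q (Go b t)"
          "zrel (\<lambda>qa. delta A qa (a i)) (Zo \<sigma> (a i) (Z i)) q2 (Go b2 t2)"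
        obtain p qp where s: "CPair p qp q \<in> S" using m(1) by blast
        obtain p2 qp2 where s2: "CPair p2 qp2 q2 \<in> S" using m(2) by blast
        have i1: "i \<noteq> l (CPair p qp q)"
        proof
          assume "i = l (CPair p qp q)"
          then have "zrel (\<lambda>x. delta A x (a i)) (Zo \<sigma> (a i) (Z i)) q Acc" using ACC[OF s] by simp
          then show False using m(5) zrel_det by fastforce
        qed
        have i2: "i \<noteq> l (CPair p2 qp2 q2)"
        proof
          assume "i = l (CPair p2 qp2 q2)"
          then have "zrel (\<lambda>x. delta A x (a i)) (Zo \<sigma> (a i) (Z i)) q2 Acc" using ACC[OF s2] by simp
          then show False using m(6) zrel_det by fastforce
        qed
        obtain c p' q' qp'' where o1: "CPair p' qp'' q' \<in> S" 
          "zrel (\<lambda>x. comp_delta A \<sigma> x (a i)) (Z i) (CPair p qp q) (Go c (CPair p' qp'' q'))"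
          "zrel (\<lambda>x. delta A x (a i)) (Zo \<sigma> (a i) (Z i)) q (Go p' q')"
          "iz (\<sigma> p') (a i) (Z i) (Go c qp'')"
          using ALLOUT[OF s m(3) i1] by blast
        obtain c2 p2' q2' qp2'' where o2: "CPair p2' qp2'' q2' \<in> S" 
          "zrel (\<lambda>x. comp_delta A \<sigma> x (a i)) (Z i) (CPair p2 qp2 q2) (Go c2 (CPair p2' qp2'' q2'))"
          "zrel (\<lambda>x. delta A x (a i)) (Zo \<sigma> (a i) (Z i)) q2 (Go p2' q2')"
          "iz (\<sigma> p2') (a i) (Z i) (Go c2 qp2'')"
          using ALLOUT[OF s2 m(3) i2] by blast
        have e1: "p' = b" using o1(3) m(5) zrel_det by fastforce
        have e2: "p2' = b2" using o2(3) m(6) zrel_det by fastforce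
        have ll: "l (CPair p qp q) \<noteq> l (CPair p2 qp2 q2)" using m(4) Lq s s2 by metis
        have "c \<noteq> c2" using H(6) s s2 ll m(3) o1(2) o2(2) by blast
        show "b \<noteq> b2"
        proof
          assume "b = b2"
          then have "c = c2" using o1(4) o2(4) e1 e2 iz_det by fastforce
          then show False using \<open>c \<noteq> c2\<close> by simp
        qed
      qed
    qed
    then show ?thesis by blast
  qed
qed

lemma Ck_nofam: "A \<in> Ck k \<Longrightarrow> 0 < k \<Longrightarrow> \<not> fam k A"
proof (induction rule: Ck.induct)
  case (base A) then show ?case using fam_base wf_aut_def by blast
next
  case (comp A T1 \<Sigma>1 \<tau> \<sigma>)
  show ?case
  proof
    assume "fam k (compose_st \<Sigma>1 T1 \<sigma> \<tau> A)"
    then have "(\<exists>p\<in>alph (compose_t T1 \<tau> A). fam k (\<sigma> p)) \<or> fam k (compose_t T1 \<tau> A)"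
      using core[OF comp.prems] unfolding compose_st_def by blast
    moreover have "alph (compose_t T1 \<tau> A) = alph A" by (simp add: compose_t_def)
    ultimately show False using comp fam_compose_t by blast
  qed
qed

definition wfc :: "kat_aut \<Rightarrow> bool" where
  "wfc A \<longleftrightarrow> (\<forall>q\<in>states A. \<forall>\<alpha>. \<alpha> \<subseteq> tests A \<longrightarrow> good_outcome (alph A) (states A) (delta A q \<alpha>)) \<and>
     (\<forall>\<alpha>. \<alpha> \<subseteq> tests A \<longrightarrow> good_outcome (alph A) (states A) (iota A \<alpha>))"

lemma hat_good:
  assumes "hat_rel B \<sigma> \<alpha> q r" "q \<in> states B" "\<forall>q\<in>states B. good_outcome (alph B) (states B) (delta B q \<alpha>)"
  shows "good_outcome (alph B) (states B) r"
  using assms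
proof (induction rule: hat_rel.induct)
  case (h_acc q) then show ?case by (simp add: good_outcome_def)
next
  case (h_go q p q') then show ?case by (metis good_outcome_def outcome.distinct(3,5))
next
  case (h_skip q p q' r) then show ?case by (metis good_outcome_def outcome.distinct(3,5) outcome.inject)
qed

lemma hat_delta_good:
  assumes "q \<in> states B" "\<forall>q\<in>states B. good_outcome (alph B) (states B) (delta B q \<alpha>)"
  shows "good_outcome (alph B) (states B) (hat_delta B \<sigma> q \<alpha>)"
proof (cases "hat_delta B \<sigma> q \<alpha> = Rej")
  case True then show ?thesis by (simp add: good_outcome_def)
next
  case False
  then show ?thesis using hat_delta_rel[OF refl False] hat_good assms by blast
qed

lemma comp_wfc:
  assumes gA: "\<forall>q\<in>states B. \<forall>\<beta>. good_outcome (alph B) (states B) (delta B q \<beta>)"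
    and gI: "\<forall>\<beta>. good_outcome (alph B) (states B) (iota B \<beta>)"
    and gS: "\<forall>p\<in>alph B. wfc (\<sigma> p) \<and> alph (\<sigma> p) = \<Sigma>1 \<and> tests (\<sigma> p) = T1"
    and tB: "tests B = T1"
  shows "wfc (compose_s \<Sigma>1 \<sigma> B)"
proof -
  let ?Q = "{CPair p qp q | p qp q. p \<in> alph B \<and> qp \<in> states (\<sigma> p) \<and> q \<in> states B}"
  have hg: "\<And>q \<alpha>. q \<in> states B \<Longrightarrow> good_outcome (alph B) (states B) (hat_delta B \<sigma> q \<alpha>)"
    using hat_delta_good gA by blast
  have sd: "\<And>p qp \<alpha>. p \<in> alph B \<Longrightarrow> qp \<in> states (\<sigma> p) \<Longrightarrow> \<alpha> \<subseteq> T1 \<Longrightarrow> good_outcome \<Sigma>1 (states (\<sigma> p)) (delta (\<sigma> p) qp \<alpha>)"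
    using gS unfolding wfc_def by metis
  have si: "\<And>p \<alpha>. p \<in> alph B \<Longrightarrow> \<alpha> \<subseteq> T1 \<Longrightarrow> good_outcome \<Sigma>1 (states (\<sigma> p)) (iota (\<sigma> p) \<alpha>)"
    using gS unfolding wfc_def by metis
  have after: "\<And>\<alpha> p' q'. \<alpha> \<subseteq> T1 \<Longrightarrow> p' \<in> alph B \<Longrightarrow> q' \<in> states B \<Longrightarrow>
     good_outcome \<Sigma>1 ?Q (case iota (\<sigma> p') \<alpha> of Go p'' qp' \<Rightarrow> Go p'' (CPair p' qp' q') | _ \<Rightarrow> Rej)"
  proof -
    fix \<alpha> p' q' assume a: "\<alpha> \<subseteq> T1" "p' \<in> alph B" "q' \<in> states B"
    show "?thesis \<alpha> p' q'"
      using si[OF a(2,1)] a unfolding good_outcome_def by (cases "iota (\<sigma> p') \<alpha>") auto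
  qed
  have D: "\<And>s \<alpha>. s \<in> ?Q \<Longrightarrow> \<alpha> \<subseteq> T1 \<Longrightarrow> good_outcome \<Sigma>1 ?Q (comp_delta B \<sigma> s \<alpha>)"
  proof -
    fix s \<alpha> assume s: "s \<in> ?Q" and a: "\<alpha> \<subseteq> T1"
    then obtain p qp q where pq: "s = CPair p qp q" "p \<in> alph B" "qp \<in> states (\<sigma> p)" "q \<in> states B" by blast
    show "good_outcome \<Sigma>1 ?Q (comp_delta B \<sigma> s \<alpha>)"
    proof (cases "delta (\<sigma> p) qp \<alpha>")
      case Acc
      show ?thesis
      proof (cases "hat_delta B \<sigma> q \<alpha>")
        case Acc2: Acc then show ?thesis using Acc pq(1) by (simp add: comp_delta_def good_outcome_def)
      next
        case Rej then show ?thesis using Acc pq(1) by (simp add: comp_delta_def good_outcome_def)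
      next
        case (Go p' q')
        then have "p' \<in> alph B" "q' \<in> states B" using hg[OF pq(4), of \<alpha>] unfolding good_outcome_def by auto
        then have "good_outcome \<Sigma>1 ?Q (case iota (\<sigma> p') \<alpha> of Go p'' qp' \<Rightarrow> Go p'' (CPair p' qp' q') | _ \<Rightarrow> Rej)"
          using after a by blast
        moreover have "comp_delta B \<sigma> s \<alpha> = (case iota (\<sigma> p') \<alpha> of Go p'' qp' \<Rightarrow> Go p'' (CPair p' qp' q') | _ \<Rightarrow> Rej)"
          using Acc Go pq(1) unfolding comp_delta_def by (cases "iota (\<sigma> p') \<alpha>") simp_all
        ultimately show ?thesis by simp
      qed
    next
      case Rej then show ?thesis using pq(1) by (simp add: comp_delta_def good_outcome_def)
    next
      case (Go p'' qp')
      then have "p'' \<in> \<Sigma>1" "qp' \<in> states (\<sigma> p)" using sd[OF pq(2,3) a] unfolding good_outcome_def by auto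
      then show ?thesis using Go pq unfolding comp_delta_def good_outcome_def by auto
    qed
  qed
  have I: "\<And>\<alpha>. \<alpha> \<subseteq> T1 \<Longrightarrow> good_outcome \<Sigma>1 ?Q (comp_iota B \<sigma> \<alpha>)"
  proof -
    fix \<alpha> assume a: "\<alpha> \<subseteq> T1"
    have hi: "good_outcome (alph B) (states B) (hat_iota B \<sigma> \<alpha>)"
    proof (cases "iota B \<alpha>")
      case (Go p q)
      then have "p \<in> alph B" "q \<in> states B" using gI unfolding good_outcome_def by (metis outcome.distinct(3,5) outcome.inject)+
      then show ?thesis using Go hg unfolding hat_iota_def by (simp add: good_outcome_def)
    qed (simp_all add: hat_iota_def good_outcome_def)
    show "good_outcome \<Sigma>1 ?Q (comp_iota B \<sigma> \<alpha>)"
    proof (cases "hat_iota B \<sigma> \<alpha>")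
      case (Go p' q')
      then have "p' \<in> alph B" "q' \<in> states B" using hi unfolding good_outcome_def by auto
      then have "good_outcome \<Sigma>1 ?Q (case iota (\<sigma> p') \<alpha> of Go p'' qp' \<Rightarrow> Go p'' (CPair p' qp' q') | _ \<Rightarrow> Rej)"
        using after a by blast
      moreover have "comp_iota B \<sigma> \<alpha> = (case iota (\<sigma> p') \<alpha> of Go p'' qp' \<Rightarrow> Go p'' (CPair p' qp' q') | _ \<Rightarrow> Rej)"
        using Go unfolding comp_iota_def by (cases "iota (\<sigma> p') \<alpha>") simp_all
      ultimately show ?thesis by simp
    qed (simp_all add: comp_iota_def good_outcome_def)
  qed
  have e: "alph (compose_s \<Sigma>1 \<sigma> B) = \<Sigma>1" "tests (compose_s \<Sigma>1 \<sigma> B) = T1"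
    "states (compose_s \<Sigma>1 \<sigma> B) = ?Q" "delta (compose_s \<Sigma>1 \<sigma> B) = comp_delta B \<sigma>"
    "iota (compose_s \<Sigma>1 \<sigma> B) = comp_iota B \<sigma>"
    using tB by (simp_all add: compose_s_def)
  show ?thesis unfolding wfc_def e using D I by blast
qed

lemma Ck_wfc: "A \<in> Ck k \<Longrightarrow> wfc A"
proof (induction rule: Ck.induct)
  case (base A) then show ?case unfolding wf_aut_def wfc_def by blast
next
  case (comp A T1 \<Sigma>1 \<tau> \<sigma>)
  let ?B = "compose_t T1 \<tau> A"
  have e: "alph ?B = alph A" "states ?B = states A" "tests ?B = T1"
    "\<And>q \<beta>. delta ?B q \<beta> = delta A q (tinv (tests A) \<tau> \<beta>)" "\<And>\<beta>. iota ?B \<beta> = iota A (tinv (tests A) \<tau> \<beta>)"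
    by (simp_all add: compose_t_def)
  have sub: "\<And>\<beta>. tinv (tests A) \<tau> \<beta> \<subseteq> tests A" unfolding tinv_def by blast
  have w: "wfc A" by (rule comp.IH)
  have gA: "\<forall>q\<in>states ?B. \<forall>\<beta>. good_outcome (alph ?B) (states ?B) (delta ?B q \<beta>)"
  proof (intro ballI allI)
    fix q \<beta> assume "q \<in> states ?B"
    then have "q \<in> states A" using e(2) by simp
    then have "good_outcome (alph A) (states A) (delta A q (tinv (tests A) \<tau> \<beta>))"
      using w sub unfolding wfc_def by blast
    then show "good_outcome (alph ?B) (states ?B) (delta ?B q \<beta>)" by (simp only: e)
  qed
  have gI: "\<forall>\<beta>. good_outcome (alph ?B) (states ?B) (iota ?B \<beta>)"
  proof
    fix \<beta>
    have "good_outcome (alph A) (states A) (iota A (tinv (tests A) \<tau> \<beta>))"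
      using w sub unfolding wfc_def by blast
    then show "good_outcome (alph ?B) (states ?B) (iota ?B \<beta>)" by (simp only: e)
  qed
  have gS: "\<forall>p\<in>alph ?B. wfc (\<sigma> p) \<and> alph (\<sigma> p) = \<Sigma>1 \<and> tests (\<sigma> p) = T1"
  proof
    fix p assume "p \<in> alph ?B"
    then have "p \<in> alph A" by (simp only: e)
    then show "wfc (\<sigma> p) \<and> alph (\<sigma> p) = \<Sigma>1 \<and> tests (\<sigma> p) = T1" using comp.IH(2) by blast
  qed
  show ?case unfolding compose_st_def using comp_wfc[OF gA gI gS e(3)] .
qed

inductive Rk :: "nat \<Rightarrow> nat \<Rightarrow> gstring \<Rightarrow> bool" for k where
  r_acc: "j \<in> {1..k} \<Longrightarrow> Rk k j ({j}, [])"
| r_step: "i \<in> {1..k} \<Longrightarrow> j \<in> {1..k} \<Longrightarrow> i \<noteq> j \<Longrightarrow> Rk k i x \<Longrightarrow> Rk k j ({i}, (j, fst x) # snd x)"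

definition gsj :: "nat \<Rightarrow> nat list \<Rightarrow> gstring" where
  "gsj j is = ({hd is}, zip (j # butlast is) (map (\<lambda>i. {i}) (tl is @ [last is])))"

lemma gsj_cons: "is \<noteq> [] \<Longrightarrow> gsj j (i # is) = ({i}, (j, fst (gsj i is)) # snd (gsj i is))"
  by (cases "is") (simp_all add: gsj_def)

lemma gs_of_gsj: "gs_of is = gsj 1 is"
  by (simp add: gs_of_def gsj_def)

lemma Rk_gs: "Rk k i x \<Longrightarrow> \<forall>j. \<exists>xs. xs \<noteq> [] \<and> set xs \<subseteq> {1..k} \<and> hd xs = i \<and>
   (\<forall>n. Suc n < length xs \<longrightarrow> xs ! n \<noteq> xs ! Suc n) \<and> gsj j xs = ({i}, (j, fst x) # snd x)"
proof (induction rule: Rk.induct)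
  case (r_acc j)
  then show ?case by (intro allI exI[of _ "[j]"]) (simp add: gsj_def)
next
  case (r_step i j x)
  show ?case
  proof
    fix j'
    obtain is0 where is0: "is0 \<noteq> []" "set is0 \<subseteq> {1..k}" "hd is0 = i"
      "\<forall>n. Suc n < length is0 \<longrightarrow> is0 ! n \<noteq> is0 ! Suc n" "gsj j is0 = ({i}, (j, fst x) # snd x)"
      using r_step.IH by blast
    have jk: "j \<in> {1..k}"
      using r_step.hyps(2) by simp
    have adj: "\<forall>n. Suc n < length (j # is0) \<longrightarrow> (j # is0) ! n \<noteq> (j # is0) ! Suc n"
    proof (intro allI impI)
      fix n assume "Suc n < length (j # is0)"
      then show "(j # is0) ! n \<noteq> (j # is0) ! Suc n"
        using is0 r_step.hyps(3) by (cases n) (auto simp: hd_conv_nth)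
    qed
    have g: "gsj j' (j # is0) = ({j}, (j', fst ({i}, (j, fst x) # snd x)) # snd ({i}, (j, fst x) # snd x))"
      using is0(1,3,5) gsj_cons[OF is0(1), of j' j] by simp
    show "\<exists>xs. xs \<noteq> [] \<and> set xs \<subseteq> {1..k} \<and> hd xs = j \<and>
   (\<forall>n. Suc n < length xs \<longrightarrow> xs ! n \<noteq> xs ! Suc n) \<and> gsj j' xs = ({j}, (j', fst ({i}, (j, fst x) # snd x)) # snd ({i}, (j, fst x) # snd x))"
      apply (rule exI[of _ "j # is0"])
      using is0 adj jk g by simp
  qed
qed

lemma lang_nil: assumes "lang_of A \<gamma> (\<alpha>, [])" shows "\<gamma> \<alpha> = Acc"
  using assms by (cases rule: lang_of.cases) simp_all

lemma lang_cons: assumes "lang_of A \<gamma> (\<alpha>, (p, \<beta>) # w)" shows "\<exists>q. \<gamma> \<alpha> = Go p q \<and> lang_of A (delta A q) (\<beta>, w)"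
  using assms by (cases rule: lang_of.cases) auto

lemma zrel_false: assumes "zrel d (\<lambda>_. False) q r" shows "d q = r"
  using assms by (cases rule: zrel.cases) simp_all

theorem theorem6p15:
  fixes k :: nat and A :: kat_aut
  assumes "k > 1"
    and "A \<in> Ck k"
    and "alph A = {1..k}" and "tests A = {1..k}"
  shows "L A \<noteq> Lk k"
proof
  assume eq: "L A = Lk k"
  have k: "1 < k" "0 < k" using assms(1) by simp_all
  have w: "wfc A" using Ck_wfc assms(2) by blast
  have stp: "\<And>s i. s \<in> states A \<Longrightarrow> i \<in> {1..k} \<Longrightarrow> good_outcome (alph A) (states A) (delta A s {i})"
  proof -
    fix s i assume a: "s \<in> states A" "i \<in> {1..k}"
    then have "{i} \<subseteq> tests A" using assms(4) by simp
    then show "good_outcome (alph A) (states A) (delta A s {i})" using w a(1) unfolding wfc_def by blast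
  qed
  define good where "good s j \<longleftrightarrow> j \<in> {1..k} \<and> (\<forall>x. Rk k j x \<longrightarrow> lang_of A (delta A s) x)" for s j
  have gacc: "\<And>s j. good s j \<Longrightarrow> delta A s {j} = Acc"
  proof -
    fix s j assume g: "good s j"
    then have "Rk k j ({j}, [])" by (simp add: good_def r_acc)
    then have "lang_of A (delta A s) ({j}, [])" using g unfolding good_def by blast
    then show "delta A s {j} = Acc" by (rule lang_nil)
  qed
  have uniq: "\<And>s j j'. good s j \<Longrightarrow> good s j' \<Longrightarrow> j = j'"
  proof (rule ccontr)
    fix s j j' assume g: "good s j" "good s j'" "j \<noteq> j'"
    have "Rk k j ({j}, [])" using g(1) unfolding good_def by (simp add: r_acc)
    then have "Rk k j' ({j}, (j', fst ({j}, ([]::(nat \<times> atom) list))) # snd ({j}, ([]::(nat \<times> atom) list)))"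
      by (rule r_step[rotated 3]) (use g in \<open>simp_all add: good_def\<close>)
    then have "lang_of A (delta A s) ({j}, [(j', {j})])" using g(2) unfolding good_def by simp
    then have "\<exists>q. delta A s {j} = Go j' q" using lang_cons by blast
    then show False using gacc[OF g(1)] by simp
  qed
  have succ: "\<And>s j i. s \<in> states A \<Longrightarrow> good s j \<Longrightarrow> i \<in> {1..k} \<Longrightarrow> i \<noteq> j \<Longrightarrow>
      \<exists>s'. delta A s {i} = Go j s' \<and> s' \<in> states A \<and> good s' i"
  proof -
    fix s j i assume s: "s \<in> states A" and g: "good s j" and i: "i \<in> {1..k}" "i \<noteq> j"
    have "Rk k i ({i}, [])" using i(1) by (rule r_acc)
    then have "Rk k j ({i}, (j, fst ({i}, ([]::(nat \<times> atom) list))) # snd ({i}, ([]::(nat \<times> atom) list)))"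
      by (rule r_step[rotated 3]) (use i g \<open>Rk k i ({i}, [])\<close> in \<open>simp_all add: good_def\<close>)
    then have "lang_of A (delta A s) ({i}, [(j, {i})])" using g unfolding good_def by simp
    then obtain s' where s': "delta A s {i} = Go j s'" using lang_cons by blast
    have s'st: "s' \<in> states A" using stp[OF s i(1)] s' unfolding good_outcome_def by simp
    have "\<forall>x. Rk k i x \<longrightarrow> lang_of A (delta A s') x"
    proof (intro allI impI)
      fix x assume "Rk k i x"
      then have "Rk k j ({i}, (j, fst x) # snd x)"
        by (rule r_step[rotated 3]) (use i g in \<open>simp_all add: good_def\<close>)
      then have "lang_of A (delta A s) ({i}, (j, fst x) # snd x)" using g unfolding good_def by blast
      then obtain q where "delta A s {i} = Go j q" "lang_of A (delta A q) (fst x, snd x)"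
        using lang_cons by blast
      then show "lang_of A (delta A s') x" using s' by simp
    qed
    then show "\<exists>s'. delta A s {i} = Go j s' \<and> s' \<in> states A \<and> good s' i"
      using s' s'st i unfolding good_def by blast
  qed
  have two: "2 \<in> {1..k}" using k by simp
  have start: "\<And>x. Rk k 2 x \<Longrightarrow> lang_of A (iota A) ({2}, (1, fst x) # snd x)"
  proof -
    fix x assume "Rk k 2 x"
    then obtain xs where xs: "xs \<noteq> []" "set xs \<subseteq> {1..k}" "hd xs = 2"
      "\<forall>n. Suc n < length xs \<longrightarrow> xs ! n \<noteq> xs ! Suc n" "gsj 1 xs = ({2}, (1, fst x) # snd x)"
      using Rk_gs by blast
    have "hd xs \<noteq> 1" using xs(3) by simp
    then have "gs_of xs \<in> Lk k" unfolding Lk_def using xs(1,2,4) by blast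
    then have "gs_of xs \<in> L A" using eq by simp
    then show "lang_of A (iota A) ({2}, (1, fst x) # snd x)" using xs(5) gs_of_gsj unfolding L_def by simp
  qed
  obtain s0 where s0: "iota A {2} = Go 1 s0"
    using start[OF r_acc[OF two]] lang_cons by fastforce
  have s0st: "s0 \<in> states A"
    using w s0 two assms(4) unfolding wfc_def good_outcome_def by (metis empty_subsetI insert_subset outcome.distinct(3,5) outcome.inject)
  have g0: "good s0 2"
    unfolding good_def
  proof (intro conjI allI impI two)
    fix x assume "Rk k 2 x"
    then obtain q where "iota A {2} = Go 1 q" "lang_of A (delta A q) (fst x, snd x)"
      using start lang_cons by blast
    then show "lang_of A (delta A s0) x" using s0 by simp
  qed
  define S where "S = {s \<in> states A. \<exists>j. good s j}"
  define l where "l s = (SOME j. good s j)" for s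
  have lS: "\<And>s. s \<in> S \<Longrightarrow> good s (l s)" unfolding S_def l_def by (metis (mono_tags, lifting) mem_Collect_eq someI)
  have "fam k A" unfolding fam_def
  proof (intro exI conjI)
    show "S \<subseteq> states A" unfolding S_def by blast
    show "\<forall>s\<in>S. l s \<in> {1..k}" using lS unfolding good_def by blast
    show "\<forall>j\<in>{1..k}. \<exists>s\<in>S. l s = j"
    proof
      fix j assume j: "j \<in> {1..k}"
      have s0S: "s0 \<in> S" unfolding S_def using s0st g0 by blast
      show "\<exists>s\<in>S. l s = j"
      proof (cases "j = 2")
        case True then show ?thesis using s0S lS uniq g0 by blast
      next
        case False
        then obtain s' where "s' \<in> states A" "good s' j" using succ[OF s0st g0 j] by blast
        then show ?thesis unfolding S_def using lS uniq S_def by blast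
      qed
    qed
    show "\<forall>s\<in>S. zrel (\<lambda>q. delta A q {l s}) ((\<lambda>_ _. False) (l s)) s Acc"
      using lS gacc zrel.z_acc by metis
    show "\<forall>s\<in>S. \<forall>i\<in>{1..k}. i \<noteq> l s \<longrightarrow> (\<exists>b s'. s' \<in> S \<and> l s' = i \<and> zrel (\<lambda>q. delta A q {i}) ((\<lambda>_ _. False) i) s (Go b s'))"
    proof (intro ballI impI)
      fix s i assume s: "s \<in> S" and i: "i \<in> {1..k}" "i \<noteq> l s"
      obtain s' where s': "delta A s {i} = Go (l s) s'" "s' \<in> states A" "good s' i"
        using succ[of s "l s" i] s i lS unfolding S_def by blast
      have "s' \<in> S" using s' unfolding S_def by blast
      moreover have "l s' = i" using lS[OF \<open>s' \<in> S\<close>] s'(3) uniq by blast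
      moreover have "zrel (\<lambda>q. delta A q {i}) ((\<lambda>_ _. False) i) s (Go (l s) s')"
        using s'(1) zrel.z_go[of "\<lambda>q. delta A q {i}" s "l s" s' "\<lambda>_. False"] by simp
      ultimately show "\<exists>b s'. s' \<in> S \<and> l s' = i \<and> zrel (\<lambda>q. delta A q {i}) ((\<lambda>_ _. False) i) s (Go b s')" by blast
    qed
    show "\<forall>s\<in>S. \<forall>s2\<in>S. \<forall>i\<in>{1..k}. \<forall>b t b2 t2. l s \<noteq> l s2 \<longrightarrow> zrel (\<lambda>q. delta A q {i}) ((\<lambda>_ _. False) i) s (Go b t)
        \<longrightarrow> zrel (\<lambda>q. delta A q {i}) ((\<lambda>_ _. False) i) s2 (Go b2 t2) \<longrightarrow> b \<noteq> b2"
    proof (intro ballI allI impI)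
      fix s s2 i b t b2 t2
      assume m: "s \<in> S" "s2 \<in> S" "i \<in> {1..k}" "l s \<noteq> l s2"
        "zrel (\<lambda>q. delta A q {i}) ((\<lambda>_ _. False) i) s (Go b t)"
        "zrel (\<lambda>q. delta A q {i}) ((\<lambda>_ _. False) i) s2 (Go b2 t2)"
      have d1: "delta A s {i} = Go b t" using zrel_false m(5) by fastforce
      have d2: "delta A s2 {i} = Go b2 t2" using zrel_false m(6) by fastforce
      have "b = l s"
      proof (cases "i = l s")
        case True then show ?thesis using gacc lS m(1) d1 by fastforce
      next
        case False
        then show ?thesis using succ[of s "l s" i] m(1,3) lS d1 unfolding S_def by fastforce
      qed
      moreover have "b2 = l s2"
      proof (cases "i = l s2")
        case True then show ?thesis using gacc lS m(2) d2 by fastforce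
      next
        case False
        then show ?thesis using succ[of s2 "l s2" i] m(2,3) lS d2 unfolding S_def by fastforce
      qed
      ultimately show "b \<noteq> b2" using m(4) by simp
    qed
  qed
  then show False using Ck_nofam assms(2) k(2) by blast
qed

end
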